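(* Let $V$ be the space of real symmetric $d\times d$ matrices, and let $\mathfrak{S}_d$ act on $V$ by simultaneous permutation of rows and columns, $X\mapsto PXP^\top$ for permutation matrices $P$. If $d\ge 2m$, then $\dim(\mathbb{R}[V]_m^{\mathfrak{S}_d})$ is independent of $d$ and satisfies $$\dim\big(\mathbb{R}[V]_m^{\mathfrak{S}_d}\big)\le\sum_{j=0}^m\sum_{\alpha\vdash 2j}q_\alpha.$$
   Context: $\mathbb{R}[V]_m$ denotes the real polynomials on $V$ of total degree at most $m$, and $\mathbb{R}[V]_m^{G}$ the subspace of $G$-invariant ones. $\alpha\vdash 2j$ means $\alpha$ is a partition of $2j$ (non-increasing sequence of positive integers summing to $2j$). For a partition $\alpha$ with $\ell$ parts, $q_\alpha$ is the number of symmetric $\ell\times\ell$ matrices with nonnegative integer entries whose vector of row sums equals $\alpha$. *)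

theory Defs
  imports "HOL-Analysis.Analysis" "HOL-Library.Function_Algebras"
begin

text \<open>Real d x d matrices are encoded as functions nat => nat => real; the space V of
  real symmetric d x d matrices is the set of symmetric such functions vanishing outside
  the index range {0..<d} x {0..<d}.\<close>

type_synonym mat = "nat \<Rightarrow> nat \<Rightarrow> real"

definition sym_mats :: "nat \<Rightarrow> mat set" where
  "sym_mats d = {X. (\<forall>i j. X i j = X j i) \<and> (\<forall>i j. d \<le> i \<or> d \<le> j \<longrightarrow> X i j = 0)}"

definition fscale :: "real \<Rightarrow> (mat \<Rightarrow> real) \<Rightarrow> (mat \<Rightarrow> real)" where
  "fscale c f = (\<lambda>X. c * f X)"

text \<open>Monomial functions on V of total degree at most m in the matrix entries
  (extended by 0 outside V, so that they are genuinely functions on V).\<close>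

definition monomial_fn :: "nat \<Rightarrow> (nat \<times> nat \<Rightarrow> nat) \<Rightarrow> mat \<Rightarrow> real" where
  "monomial_fn d e = (\<lambda>X. if X \<in> sym_mats d
      then (\<Prod>p\<in>{..<d} \<times> {..<d}. X (fst p) (snd p) ^ e p) else 0)"

definition monomials_upto :: "nat \<Rightarrow> nat \<Rightarrow> (mat \<Rightarrow> real) set" where
  "monomials_upto d m = {monomial_fn d e | e.
      (\<forall>p. p \<notin> {..<d} \<times> {..<d} \<longrightarrow> e p = 0) \<and> (\<Sum>p\<in>{..<d} \<times> {..<d}. e p) \<le> m}"

definition poly_upto :: "nat \<Rightarrow> nat \<Rightarrow> (mat \<Rightarrow> real) set" where
  "poly_upto d m = module.span fscale (monomials_upto d m)"

text \<open>Action of a permutation sigma of {0..<d}: X |-> P X P^T, i.e. entries X (sigma i) (sigma j).\<close>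

definition perm_act :: "(nat \<Rightarrow> nat) \<Rightarrow> mat \<Rightarrow> mat" where
  "perm_act \<sigma> X = (\<lambda>i j. X (\<sigma> i) (\<sigma> j))"

definition inv_poly_upto :: "nat \<Rightarrow> nat \<Rightarrow> (mat \<Rightarrow> real) set" where
  "inv_poly_upto d m = {p \<in> poly_upto d m.
      \<forall>\<sigma>. \<sigma> permutes {..<d} \<longrightarrow> (\<forall>X \<in> sym_mats d. p (perm_act \<sigma> X) = p X)}"

definition inv_dim :: "nat \<Rightarrow> nat \<Rightarrow> nat" where
  "inv_dim d m = vector_space.dim fscale (inv_poly_upto d m)"

definition partitions_of :: "nat \<Rightarrow> nat list set" where
  "partitions_of n = {\<alpha>. sorted_wrt (\<ge>) \<alpha> \<and> (\<forall>x\<in>set \<alpha>. 0 < x) \<and> sum_list \<alpha> = n}"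

definition q_count :: "nat list \<Rightarrow> nat" where
  "q_count \<alpha> = card {M :: nat \<Rightarrow> nat \<Rightarrow> nat.
      (\<forall>i j. M i j = M j i) \<and>
      (\<forall>i j. length \<alpha> \<le> i \<or> length \<alpha> \<le> j \<longrightarrow> M i j = 0) \<and>
      (\<forall>i < length \<alpha>. (\<Sum>j<length \<alpha>. M i j) = \<alpha> ! i)}"

end

theory Submission
  imports Defs
begin


interpretation fs: vector_space fscale
  by unfold_locales (auto simp: fscale_def fun_eq_iff algebra_simps)

lemma fscale_apply: "fscale c f X = c * f X" by (simp add: fscale_def)

lemma fsum_apply: "(sum f A) x = (\<Sum>a\<in>A. f a x)"
  by (induction A rule: infinite_finite_induct) auto

lemma span_map:
  assumes add: "\<And>f g. L (f + g) = L f + L g"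
    and sc: "\<And>a f. L (fscale a f) = fscale a (L f)"
    and B: "\<And>b. b \<in> B \<Longrightarrow> L b \<in> fs.span C"
    and q: "q \<in> fs.span B"
  shows "L q \<in> fs.span C"
  using q
proof (induction rule: fs.span_induct_alt)
  case base
  have "L 0 = L 0 + L 0" using add[of 0 0] by simp
  then have "L 0 = 0" by simp
  then show ?case by (metis fs.span_zero)
next
  case (step c x y)
  have "L (fscale c x + y) = fscale c (L x) + L y" by (simp only: add sc)
  then show ?case using step B by (metis fs.span_add fs.span_scale)
qed

definition Zv :: "nat \<Rightarrow> mat \<Rightarrow> mat" where
  "Zv v X = (\<lambda>i j. if i = v \<or> j = v then 0 else X i j)"

definition Aop :: "nat \<Rightarrow> (mat \<Rightarrow> real) \<Rightarrow> (mat \<Rightarrow> real)" where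
  "Aop n f = (\<lambda>X. if X \<in> sym_mats n then (\<Sum>v<n. f (Zv v X)) else 0)"

definition vset :: "nat \<Rightarrow> (nat \<times> nat \<Rightarrow> nat) \<Rightarrow> nat set" where
  "vset n e = {v. v < n \<and> (\<exists>w<n. e (v,w) \<noteq> 0 \<or> e (w,v) \<noteq> 0)}"

lemma Zv_sym: "X \<in> sym_mats n \<Longrightarrow> Zv v X \<in> sym_mats n"
  by (auto simp: sym_mats_def Zv_def)

lemma mono_Zv:
  assumes X: "X \<in> sym_mats n" and v: "v < n"
  shows "monomial_fn n e (Zv v X) = (if v \<in> vset n e then 0 else monomial_fn n e X)"
proof (cases "v \<in> vset n e")
  case True
  then obtain w where w: "w < n" "e (v,w) \<noteq> 0 \<or> e (w,v) \<noteq> 0" by (auto simp: vset_def)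
  have "(\<Prod>p\<in>{..<n} \<times> {..<n}. Zv v X (fst p) (snd p) ^ e p) = 0"
  proof (rule prod_zero)
    show "\<exists>a\<in>{..<n} \<times> {..<n}. Zv v X (fst a) (snd a) ^ e a = 0"
    proof (cases "e (v,w) \<noteq> 0")
      case True
      then show ?thesis using v w by (intro bexI[of _ "(v,w)"]) (auto simp: Zv_def)
    next
      case False
      then show ?thesis using v w by (intro bexI[of _ "(w,v)"]) (auto simp: Zv_def)
    qed
  qed simp
  then show ?thesis using True Zv_sym[OF X] by (simp add: monomial_fn_def)
next
  case False
  have "(\<Prod>p\<in>{..<n} \<times> {..<n}. Zv v X (fst p) (snd p) ^ e p)
      = (\<Prod>p\<in>{..<n} \<times> {..<n}. X (fst p) (snd p) ^ e p)"
  proof (rule prod.cong)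
    fix p assume p: "p \<in> {..<n} \<times> {..<n}"
    show "Zv v X (fst p) (snd p) ^ e p = X (fst p) (snd p) ^ e p"
    proof (cases "e p = 0")
      case False
      have "fst p \<noteq> v \<and> snd p \<noteq> v"
        using False p \<open>v \<notin> vset n e\<close> by (cases p) (auto simp: vset_def)
      then show ?thesis by (simp add: Zv_def)
    qed simp
  qed simp
  then show ?thesis using False Zv_sym[OF X] X by (simp add: monomial_fn_def)
qed

lemma vset_sub: "vset n e \<subseteq> {..<n}" by (auto simp: vset_def)

lemma Aop_mono:
  "Aop n (monomial_fn n e) = fscale (real n - real (card (vset n e))) (monomial_fn n e)"
proof (rule ext)
  fix X
  show "Aop n (monomial_fn n e) X = fscale (real n - real (card (vset n e))) (monomial_fn n e) X"
  proof (cases "X \<in> sym_mats n")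
    case True
    have "(\<Sum>v<n. monomial_fn n e (Zv v X)) = (\<Sum>v<n. if v \<in> vset n e then 0 else monomial_fn n e X)"
      using True by (intro sum.cong) (auto simp: mono_Zv)
    also have "\<dots> = (\<Sum>v\<in>{..<n} - vset n e. monomial_fn n e X)"
      by (subst sum.If_cases) (auto simp: Diff_eq)
    also have "\<dots> = real (n - card (vset n e)) * monomial_fn n e X"
      using vset_sub[of n e] by (simp add: card_Diff_subset finite_subset)
    also have "\<dots> = (real n - real (card (vset n e))) * monomial_fn n e X"
      using card_mono[OF _ vset_sub[of n e]] by (simp add: of_nat_diff)
    finally show ?thesis using True by (simp add: Aop_def fscale_apply)
  next
    case False
    then show ?thesis by (simp add: Aop_def fscale_apply monomial_fn_def)
  qed
qed

lemma Aop_add: "Aop n (f + g) = Aop n f + Aop n g"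
  by (auto simp: Aop_def fun_eq_iff sum.distrib)

lemma Aop_scale: "Aop n (fscale a f) = fscale a (Aop n f)"
  by (auto simp: Aop_def fscale_def fun_eq_iff sum_distrib_left)

lemma Aop_zero: "Aop n 0 = 0"
  by (auto simp: Aop_def fun_eq_iff)

lemma eigen_span:
  assumes "\<And>b. b \<in> B \<Longrightarrow> Aop n b = fscale k b" "a \<in> fs.span B"
  shows "Aop n a = fscale k a"
  using assms(2)
proof (induction rule: fs.span_induct_alt)
  case base
  then show ?case by (simp add: Aop_def fun_eq_iff fscale_apply)
next
  case (step c x y)
  have "Aop n (fscale c x + y) = fscale c (Aop n x) + Aop n y" by (simp only: Aop_add Aop_scale)
  also have "\<dots> = fscale c (fscale k x) + fscale k y" using step assms(1) by simp
  also have "\<dots> = fscale k (fscale c x + y)" by (simp add: fun_eq_iff fscale_apply algebra_simps)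
  finally show ?case .
qed

lemma eigen_zero:
  assumes "finite K"
  shows "(\<forall>b\<in>B. \<exists>k\<in>K. Aop n b = fscale k b) \<Longrightarrow> q \<in> fs.span B \<Longrightarrow> Aop n q = fscale c q
     \<Longrightarrow> c \<notin> K \<Longrightarrow> q = 0"
  using assms
proof (induction K arbitrary: B q rule: finite_induct)
  case empty
  then have "B = {}" by auto
  then show ?case using empty by simp
next
  case (insert k K B q)
  define Bk where "Bk = {b\<in>B. Aop n b = fscale k b}"
  define B' where "B' = B - Bk"
  have BU: "B = Bk \<union> B'" by (auto simp: Bk_def B'_def)
  have B'eig: "\<forall>b\<in>B'. \<exists>k'\<in>K. Aop n b = fscale k' b"
  proof
    fix b assume b: "b \<in> B'"
    then obtain k' where k': "k' \<in> insert k K" "Aop n b = fscale k' b"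
      using insert.prems(1) by (auto simp: B'_def)
    have "k' \<noteq> k" using b k' by (auto simp: B'_def Bk_def)
    then show "\<exists>k'\<in>K. Aop n b = fscale k' b" using k' by auto
  qed
  obtain a b where ab: "a \<in> fs.span Bk" "b \<in> fs.span B'" "q = a + b"
    using insert.prems(2) BU fs.span_Un by blast
  have Aa: "Aop n a = fscale k a"
    by (rule eigen_span[OF _ ab(1)]) (auto simp: Bk_def)
  have Ab: "Aop n b \<in> fs.span B'"
  proof (rule span_map[OF Aop_add Aop_scale _ ab(2)])
    fix b' assume "b' \<in> B'"
    then obtain k' where "Aop n b' = fscale k' b'" using B'eig by auto
    then show "Aop n b' \<in> fs.span B'" using \<open>b' \<in> B'\<close> by (metis fs.span_base fs.span_scale)
  qed
  define q' where "q' = fscale (c - k) q"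
  have pt: "\<And>X. Aop n q X = c * q X" using insert.prems(3) by (simp add: fscale_apply)
  have pta: "\<And>X. Aop n a X = k * a X" using Aa by (simp add: fscale_apply)
  have ptab: "\<And>X. Aop n q X = Aop n a X + Aop n b X" using ab(3) Aop_add by simp
  have "q' = Aop n b - fscale k b"
  proof (rule ext)
    fix X
    have "q' X = c * q X - k * q X" by (simp add: q'_def fscale_apply algebra_simps)
    also have "\<dots> = Aop n b X - k * b X"
      using pt[of X] pta[of X] ptab[of X] ab(3) by (simp add: algebra_simps)
    finally show "q' X = (Aop n b - fscale k b) X" by (simp add: fscale_apply)
  qed
  then have q'sp: "q' \<in> fs.span B'" using Ab ab(2) by (metis fs.span_diff fs.span_scale)
  have "Aop n q' = fscale c q'"
    by (simp add: q'_def Aop_scale insert.prems(3) fun_eq_iff fscale_apply)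
  then have "q' = 0" using insert.IH[OF B'eig q'sp] insert.prems(4) by auto
  then have "\<And>X. (c - k) * q X = 0" by (metis q'_def fscale_apply zero_fun_def)
  moreover have "c \<noteq> k" using insert.prems(4) by auto
  ultimately show "q = 0" by (auto simp: fun_eq_iff)
qed



lemma perm_sym: "\<sigma> permutes {..<n} \<Longrightarrow> X \<in> sym_mats n \<Longrightarrow> perm_act \<sigma> X \<in> sym_mats n"
  unfolding sym_mats_def perm_act_def
  by (auto simp: permutes_not_in)

lemma perm_comp: "perm_act (f \<circ> g) X = perm_act g (perm_act f X)"
  by (simp add: perm_act_def)

lemma sym_mono: "d \<le> n \<Longrightarrow> sym_mats d \<subseteq> sym_mats n"
  by (auto simp: sym_mats_def)

lemma span_vanish:
  assumes "p \<in> fs.span (monomials_upto n m)" "X \<notin> sym_mats n"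
  shows "p X = 0"
  using assms(1)
proof (induction rule: fs.span_induct_alt)
  case base then show ?case by simp
next
  case (step c x y)
  then have "x X = 0" using assms(2) by (auto simp: monomials_upto_def monomial_fn_def)
  then show ?case using step by (simp add: fscale_apply)
qed

lemma finite_monos: "finite (monomials_upto n m)"
proof -
  let ?E = "{e :: nat \<times> nat \<Rightarrow> nat. (\<forall>p. p \<notin> {..<n} \<times> {..<n} \<longrightarrow> e p = 0) \<and> (\<Sum>p\<in>{..<n} \<times> {..<n}. e p) \<le> m}"
  have "?E \<subseteq> {e. \<forall>x. (x \<in> {..<n} \<times> {..<n} \<longrightarrow> e x \<in> {..m}) \<and> (x \<notin> {..<n} \<times> {..<n} \<longrightarrow> e x = 0)}"
  proof
    fix e assume "e \<in> ?E"
    then have e0: "\<forall>p. p \<notin> {..<n} \<times> {..<n} \<longrightarrow> e p = 0"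
      and es: "(\<Sum>p\<in>{..<n} \<times> {..<n}. e p) \<le> m" by auto
    show "e \<in> {e. \<forall>x. (x \<in> {..<n} \<times> {..<n} \<longrightarrow> e x \<in> {..m}) \<and> (x \<notin> {..<n} \<times> {..<n} \<longrightarrow> e x = 0)}"
    proof (intro CollectI allI conjI impI)
      fix x assume x: "x \<in> {..<n} \<times> {..<n}"
      have "e x \<le> (\<Sum>p\<in>{..<n} \<times> {..<n}. e p)"
        using x by (intro member_le_sum) auto
      then show "e x \<in> {..m}" using es by auto
    next
      fix x assume "x \<notin> {..<n} \<times> {..<n}"
      then show "e x = 0" using e0 by metis
    qed
  qed
  moreover have "finite {e :: nat \<times> nat \<Rightarrow> nat. \<forall>x. (x \<in> {..<n} \<times> {..<n} \<longrightarrow> e x \<in> {..m}) \<and> (x \<notin> {..<n} \<times> {..<n} \<longrightarrow> e x = 0)}"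
    by (intro finite_set_of_finite_funs) auto
  ultimately have "finite ?E" by (rule finite_subset)
  moreover have "monomials_upto n m = monomial_fn n ` ?E"
    by (auto simp: monomials_upto_def)
  ultimately show ?thesis by simp
qed

lemma inv_sub: "inv_poly_upto n m \<subseteq> fs.span (monomials_upto n m)"
  by (auto simp: inv_poly_upto_def poly_upto_def)

lemma inv_subspace: "fs.subspace (inv_poly_upto n m)"
  unfolding fs.subspace_def
proof (intro conjI ballI allI)
  show "0 \<in> inv_poly_upto n m"
    by (simp add: inv_poly_upto_def poly_upto_def fs.span_zero)
next
  fix x y assume "x \<in> inv_poly_upto n m" "y \<in> inv_poly_upto n m"
  then show "x + y \<in> inv_poly_upto n m"
    by (auto simp: inv_poly_upto_def poly_upto_def fs.span_add)
next
  fix c x assume "x \<in> inv_poly_upto n m"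
  then show "fscale c x \<in> inv_poly_upto n m"
    by (auto simp: inv_poly_upto_def poly_upto_def fs.span_scale fscale_apply)
qed

lemma card_vset:
  assumes "\<forall>p. p \<notin> {..<n} \<times> {..<n} \<longrightarrow> e p = 0" "(\<Sum>p\<in>{..<n} \<times> {..<n}. e p) \<le> m"
  shows "card (vset n e) \<le> 2 * m"
proof -
  define S where "S = {p \<in> {..<n} \<times> {..<n}. e p \<noteq> 0}"
  have fS: "finite S" by (auto simp: S_def)
  have "vset n e \<subseteq> fst ` S \<union> snd ` S"
  proof
    fix v assume "v \<in> vset n e"
    then obtain w where "v < n" "w < n" and dj: "e (v,w) \<noteq> 0 \<or> e (w,v) \<noteq> 0" by (auto simp: vset_def)
    from dj show "v \<in> fst ` S \<union> snd ` S"
    proof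
      assume "e (v,w) \<noteq> 0"
      then have "(v,w) \<in> S" using \<open>v < n\<close> \<open>w < n\<close> by (simp add: S_def)
      then show ?thesis by (metis UnI1 fst_conv image_eqI)
    next
      assume "e (w,v) \<noteq> 0"
      then have "(w,v) \<in> S" using \<open>v < n\<close> \<open>w < n\<close> by (simp add: S_def)
      then show ?thesis by (metis UnI2 snd_conv image_eqI)
    qed
  qed
  then have "card (vset n e) \<le> card (fst ` S \<union> snd ` S)"
    using fS by (intro card_mono) auto
  also have "\<dots> \<le> card (fst ` S) + card (snd ` S)" by (rule card_Un_le)
  also have "\<dots> \<le> card S + card S" using fS by (intro add_mono card_image_le) auto
  also have "card S \<le> m"
  proof -
    have "card S = (\<Sum>p\<in>S. 1)" by simp
    also have "\<dots> \<le> (\<Sum>p\<in>S. e p)" by (intro sum_mono) (auto simp: S_def)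
    also have "\<dots> \<le> (\<Sum>p\<in>{..<n} \<times> {..<n}. e p)" by (intro sum_mono2) (auto simp: S_def)
    finally show ?thesis using assms(2) by simp
  qed
  finally show ?thesis by simp
qed

definition Rop :: "nat \<Rightarrow> (mat \<Rightarrow> real) \<Rightarrow> (mat \<Rightarrow> real)" where
  "Rop d f = (\<lambda>X. if X \<in> sym_mats d then f X else 0)"

lemma Rop_add: "Rop d (f + g) = Rop d f + Rop d g"
  by (auto simp: Rop_def fun_eq_iff)
lemma Rop_scale: "Rop d (fscale a f) = fscale a (Rop d f)"
  by (auto simp: Rop_def fun_eq_iff fscale_apply)

lemma Rop_mono:
  assumes e0: "\<forall>p. p \<notin> {..<Suc d} \<times> {..<Suc d} \<longrightarrow> e p = 0"
    and es: "(\<Sum>p\<in>{..<Suc d} \<times> {..<Suc d}. e p) \<le> m"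
  shows "Rop d (monomial_fn (Suc d) e) \<in> fs.span (monomials_upto d m)"
proof (cases "\<forall>p. p \<notin> {..<d} \<times> {..<d} \<longrightarrow> e p = 0")
  case True
  have sub: "{..<d} \<times> {..<d} \<subseteq> {..<Suc d} \<times> {..<Suc d}" by (rule Sigma_mono) auto
  have z: "\<forall>p\<in>{..<Suc d} \<times> {..<Suc d} - {..<d} \<times> {..<d}. e p = 0" using True by (meson DiffD2)
  have "(\<Sum>p\<in>{..<Suc d} \<times> {..<Suc d}. e p) = (\<Sum>p\<in>{..<d} \<times> {..<d}. e p)"
    by (rule sum.mono_neutral_right[OF _ sub z]) simp
  then have sd: "(\<Sum>p\<in>{..<d} \<times> {..<d}. e p) \<le> m" using es by linarith
  have mem: "monomial_fn d e \<in> monomials_upto d m"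
    unfolding monomials_upto_def
    by (rule CollectI, rule exI[of _ e], intro conjI refl True sd)
  have "Rop d (monomial_fn (Suc d) e) = monomial_fn d e"
  proof (rule ext)
    fix X
    show "Rop d (monomial_fn (Suc d) e) X = monomial_fn d e X"
    proof (cases "X \<in> sym_mats d")
      case True
      then have "X \<in> sym_mats (Suc d)" using sym_mono[of d "Suc d"] by auto
      moreover have "(\<Prod>p\<in>{..<Suc d} \<times> {..<Suc d}. X (fst p) (snd p) ^ e p) =
          (\<Prod>p\<in>{..<d} \<times> {..<d}. X (fst p) (snd p) ^ e p)"
        using z by (intro prod.mono_neutral_right[OF _ sub]) auto
      ultimately show ?thesis using True by (simp add: Rop_def monomial_fn_def)
    qed (simp add: Rop_def monomial_fn_def)
  qed
  then show ?thesis using mem by (simp add: fs.span_base)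
next
  case False
  then obtain p where p: "p \<notin> {..<d} \<times> {..<d}" "e p \<noteq> 0" by auto
  then have pin: "p \<in> {..<Suc d} \<times> {..<Suc d}" using e0 p(2) by metis
  have "Rop d (monomial_fn (Suc d) e) = 0"
  proof (rule ext)
    fix X
    show "Rop d (monomial_fn (Suc d) e) X = 0 X"
    proof (cases "X \<in> sym_mats d")
      case True
      have "X (fst p) (snd p) = 0" using True p(1) by (cases p) (auto simp: sym_mats_def)
      then have x0: "X (fst p) (snd p) ^ e p = 0" using p(2) by simp
      have "(\<Prod>p\<in>{..<Suc d} \<times> {..<Suc d}. X (fst p) (snd p) ^ e p) = 0"
      proof (rule prod_zero)
        show "\<exists>a\<in>{..<Suc d} \<times> {..<Suc d}. X (fst a) (snd a) ^ e a = 0" using pin x0 by blast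
      qed simp
      then show ?thesis using True by (simp add: Rop_def monomial_fn_def)
    qed (simp add: Rop_def)
  qed
  then show ?thesis by (metis fs.span_zero)
qed

lemma Rop_inv:
  assumes "p \<in> inv_poly_upto (Suc d) m"
  shows "Rop d p \<in> inv_poly_upto d m"
proof -
  have "Rop d p \<in> fs.span (monomials_upto d m)"
  proof (rule span_map[OF Rop_add Rop_scale])
    show "p \<in> fs.span (monomials_upto (Suc d) m)" using assms by (auto simp: inv_poly_upto_def poly_upto_def)
  next
    fix b assume "b \<in> monomials_upto (Suc d) m"
    then obtain e where e: "b = monomial_fn (Suc d) e" "\<forall>p. p \<notin> {..<Suc d} \<times> {..<Suc d} \<longrightarrow> e p = 0"
        "(\<Sum>p\<in>{..<Suc d} \<times> {..<Suc d}. e p) \<le> m"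
      unfolding monomials_upto_def by blast
    then show "Rop d b \<in> fs.span (monomials_upto d m)"
      using Rop_mono[OF e(2) e(3)] by simp
  qed
  moreover have "\<forall>\<sigma>. \<sigma> permutes {..<d} \<longrightarrow> (\<forall>X\<in>sym_mats d. Rop d p (perm_act \<sigma> X) = Rop d p X)"
  proof (intro allI impI ballI)
    fix \<sigma> X assume s: "\<sigma> permutes {..<d}" and X: "X \<in> sym_mats d"
    have s': "\<sigma> permutes {..<Suc d}" using s by (rule permutes_subset) auto
    have X': "X \<in> sym_mats (Suc d)" using X sym_mono[of d "Suc d"] by auto
    have "p (perm_act \<sigma> X) = p X" using assms s' X' by (auto simp: inv_poly_upto_def)
    then show "Rop d p (perm_act \<sigma> X) = Rop d p X" using perm_sym[OF s X] X by (simp add: Rop_def)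
  qed
  ultimately show ?thesis by (simp add: inv_poly_upto_def poly_upto_def)
qed

lemma taux: "v < Suc d \<Longrightarrow> d \<le> k \<Longrightarrow> Transposition.transpose v d k = v \<or> Suc d \<le> Transposition.transpose v d k"
  by (cases "k = d") (auto simp: transpose_def)

lemma Rop_inj0:
  assumes dm: "2 * m \<le> d" and p: "p \<in> inv_poly_upto (Suc d) m" and R: "Rop d p = 0"
  shows "p = 0"
proof -
  have psp: "p \<in> fs.span (monomials_upto (Suc d) m)" using p by (auto simp: inv_poly_upto_def poly_upto_def)
  have "Aop (Suc d) p = fscale 0 p"
  proof (rule ext)
    fix X
    show "Aop (Suc d) p X = fscale 0 p X"
    proof (cases "X \<in> sym_mats (Suc d)")
      case True
      have "p (Zv v X) = 0" if v: "v < Suc d" for v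
      proof -
        let ?t = "Transposition.transpose v d"
        have t: "?t permutes {..<Suc d}" using v by (intro permutes_swap_id) auto
        have X0: "\<forall>a b. Suc d \<le> a \<or> Suc d \<le> b \<longrightarrow> X a b = 0"
          using True by (auto simp: sym_mats_def)
        have "p (perm_act ?t (Zv v X)) = p (Zv v X)"
          using p t Zv_sym[OF True] by (auto simp: inv_poly_upto_def)
        moreover have W: "perm_act ?t (Zv v X) \<in> sym_mats d"
          unfolding sym_mats_def
        proof (intro CollectI conjI allI impI)
          fix i j show "perm_act ?t (Zv v X) i j = perm_act ?t (Zv v X) j i"
            using True unfolding sym_mats_def perm_act_def Zv_def by auto
        next
          fix i j assume "d \<le> i \<or> d \<le> j"
          then show "perm_act ?t (Zv v X) i j = 0"
          proof -
            have "?t i = v \<or> Suc d \<le> ?t i \<or> ?t j = v \<or> Suc d \<le> ?t j"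
              using taux[OF v, of i] taux[OF v, of j] \<open>d \<le> i \<or> d \<le> j\<close> by blast
            then show ?thesis using X0 unfolding perm_act_def Zv_def by auto
          qed
        qed
        moreover have "Rop d p (perm_act ?t (Zv v X)) = 0" using R by simp
        ultimately show ?thesis by (simp add: Rop_def)
      qed
      then show ?thesis using True by (simp add: Aop_def fscale_apply)
    qed (simp add: Aop_def fscale_apply)
  qed
  define K where "K = (\<lambda>s. real (Suc d) - real s) ` {..2*m}"
  have fK: "finite K" by (simp add: K_def)
  have nK: "0 \<notin> K"
    proof
      assume "0 \<in> K"
      then obtain s where "s \<le> 2*m" "0 = real (Suc d) - real s" by (auto simp: K_def)
      then show False using dm by linarith
    qed
  have eK: "\<forall>b\<in>monomials_upto (Suc d) m. \<exists>k\<in>K. Aop (Suc d) b = fscale k b"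
    proof
      fix b assume "b \<in> monomials_upto (Suc d) m"
      then obtain e where e: "b = monomial_fn (Suc d) e"
        "\<forall>p. p \<notin> {..<Suc d} \<times> {..<Suc d} \<longrightarrow> e p = 0" "(\<Sum>p\<in>{..<Suc d} \<times> {..<Suc d}. e p) \<le> m"
        unfolding monomials_upto_def by blast
      have "card (vset (Suc d) e) \<le> 2 * m" using card_vset[OF e(2,3)] .
      then have "card (vset (Suc d) e) \<in> {..2*m}" by simp
      then have "real (Suc d) - real (card (vset (Suc d) e)) \<in> K"
        unfolding K_def by (rule imageI)
      moreover have "Aop (Suc d) b = fscale (real (Suc d) - real (card (vset (Suc d) e))) b"
        unfolding e(1) by (rule Aop_mono)
      ultimately show "\<exists>k\<in>K. Aop (Suc d) b = fscale k b"
        by blast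
    qed
  show ?thesis by (rule eigen_zero[OF fK eK psp \<open>Aop (Suc d) p = fscale 0 p\<close> nK])
qed



lemma pair_perm_bij:
  assumes "\<pi> permutes {..<n}"
  shows "bij_betw (\<lambda>p. (\<pi> (fst p), \<pi> (snd p))) ({..<n} \<times> {..<n}) ({..<n} \<times> {..<n})"
proof -
  have "(\<lambda>p. (\<pi> (fst p), \<pi> (snd p))) = map_prod \<pi> \<pi>" by (rule ext) (simp add: map_prod_def split_def)
  moreover have "bij_betw (map_prod \<pi> \<pi>) ({..<n} \<times> {..<n}) ({..<n} \<times> {..<n})"
    by (intro bij_betw_map_prod permutes_imp_bij[OF assms])
  ultimately show ?thesis by simp
qed

lemma prod_pairs_perm:
  assumes "\<pi> permutes {..<n}"
  shows "(\<Prod>p\<in>{..<n} \<times> {..<n}. F (\<pi> (fst p), \<pi> (snd p))) = (\<Prod>p\<in>{..<n} \<times> {..<n}. (F p :: real))"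
  using prod.reindex_bij_betw[OF pair_perm_bij[OF assms], of F] by simp

lemma sum_pairs_perm:
  assumes "\<pi> permutes {..<n}"
  shows "(\<Sum>p\<in>{..<n} \<times> {..<n}. F (\<pi> (fst p), \<pi> (snd p))) = (\<Sum>p\<in>{..<n} \<times> {..<n}. (F p :: nat))"
  using sum.reindex_bij_betw[OF pair_perm_bij[OF assms], of F] by simp

definition trunc :: "nat \<Rightarrow> mat \<Rightarrow> mat" where
  "trunc d Y = (\<lambda>i j. if i < d \<and> j < d then Y i j else 0)"

definition Eop :: "nat \<Rightarrow> (mat \<Rightarrow> real) \<Rightarrow> (mat \<Rightarrow> real)" where
  "Eop d f = (\<lambda>X. if X \<in> sym_mats (Suc d)
      then (\<Sum>v<Suc d. f (trunc d (perm_act (Transposition.transpose v d) X))) else 0)"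

lemma trunc_sym: "(\<And>i j. Y i j = Y j i) \<Longrightarrow> trunc d Y \<in> sym_mats d"
  by (auto simp: trunc_def sym_mats_def)

lemma perm_symm: "X \<in> sym_mats n \<Longrightarrow> perm_act \<sigma> X i j = perm_act \<sigma> X j i"
  by (simp add: perm_act_def sym_mats_def)

lemma Eop_add: "Eop d (f + g) = Eop d f + Eop d g"
  by (auto simp: Eop_def fun_eq_iff sum.distrib)
lemma Eop_scale: "Eop d (fscale a f) = fscale a (Eop d f)"
  by (auto simp: Eop_def fun_eq_iff fscale_apply sum_distrib_left simp del: sum.lessThan_Suc)

lemma Eop_mono:
  assumes e0: "\<forall>p. p \<notin> {..<d} \<times> {..<d} \<longrightarrow> e p = 0"
    and es: "(\<Sum>p\<in>{..<d} \<times> {..<d}. e p) \<le> m"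
  shows "Eop d (monomial_fn d e) \<in> fs.span (monomials_upto (Suc d) m)"
proof -
  define e' where "e' v = (\<lambda>p. e (Transposition.transpose v d (fst p), Transposition.transpose v d (snd p)))" for v
  have sub: "{..<d} \<times> {..<d} \<subseteq> {..<Suc d} \<times> {..<Suc d}" by (rule Sigma_mono) auto
  have z: "\<forall>p\<in>{..<Suc d} \<times> {..<Suc d} - {..<d} \<times> {..<d}. e p = 0" using e0 by (meson DiffD2)
  have mem: "monomial_fn (Suc d) (e' v) \<in> monomials_upto (Suc d) m" if v: "v < Suc d" for v
  proof -
    let ?t = "Transposition.transpose v d"
    have t: "?t permutes {..<Suc d}" using v by (intro permutes_swap_id) auto
    have ti: "\<And>x. ?t x < Suc d \<longleftrightarrow> x < Suc d" using permutes_in_image[OF t] by simp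
    have z': "\<forall>p. p \<notin> {..<Suc d} \<times> {..<Suc d} \<longrightarrow> e' v p = 0"
    proof (intro allI impI)
      fix p assume "p \<notin> {..<Suc d} \<times> {..<Suc d}"
      then have "\<not> fst p < Suc d \<or> \<not> snd p < Suc d" by (cases p) auto
      then have "\<not> ?t (fst p) < Suc d \<or> \<not> ?t (snd p) < Suc d" using ti by blast
      then have "(?t (fst p), ?t (snd p)) \<notin> {..<d} \<times> {..<d}" by auto
      then show "e' v p = 0" using e0 by (simp add: e'_def)
    qed
    have "(\<Sum>p\<in>{..<Suc d} \<times> {..<Suc d}. e' v p) = (\<Sum>p\<in>{..<Suc d} \<times> {..<Suc d}. e p)"
      unfolding e'_def by (rule sum_pairs_perm[OF t])
    also have "\<dots> = (\<Sum>p\<in>{..<d} \<times> {..<d}. e p)"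
      by (rule sum.mono_neutral_right[OF _ sub z]) simp
    finally have s: "(\<Sum>p\<in>{..<Suc d} \<times> {..<Suc d}. e' v p) \<le> m" using es by linarith
    show ?thesis unfolding monomials_upto_def
      by (rule CollectI, rule exI[of _ "e' v"], intro conjI refl z' s)
  qed
  have key: "monomial_fn d e (trunc d (perm_act (Transposition.transpose v d) X)) = monomial_fn (Suc d) (e' v) X"
    if v: "v < Suc d" and X: "X \<in> sym_mats (Suc d)" for v X
  proof -
    let ?t = "Transposition.transpose v d"
    have t: "?t permutes {..<Suc d}" using v by (intro permutes_swap_id) auto
    have W: "trunc d (perm_act ?t X) \<in> sym_mats d"
      by (rule trunc_sym) (rule perm_symm[OF X])
    define G where "G q = X (?t (fst q)) (?t (snd q)) ^ e q" for q
    have "(\<Prod>p\<in>{..<d} \<times> {..<d}. trunc d (perm_act ?t X) (fst p) (snd p) ^ e p)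
        = (\<Prod>p\<in>{..<d} \<times> {..<d}. G p)"
      by (rule prod.cong) (auto simp: trunc_def perm_act_def G_def)
    also have "\<dots> = (\<Prod>p\<in>{..<Suc d} \<times> {..<Suc d}. G p)"
      by (rule prod.mono_neutral_left[OF _ sub]) (use z in \<open>auto simp: G_def\<close>)
    also have "\<dots> = (\<Prod>p\<in>{..<Suc d} \<times> {..<Suc d}. G (?t (fst p), ?t (snd p)))"
      by (rule prod_pairs_perm[OF t, symmetric])
    also have "\<dots> = (\<Prod>p\<in>{..<Suc d} \<times> {..<Suc d}. X (fst p) (snd p) ^ e' v p)"
      by (simp add: G_def e'_def)
    finally show ?thesis using W X by (simp add: monomial_fn_def)
  qed
  have eq: "Eop d (monomial_fn d e) = (\<Sum>v<Suc d. monomial_fn (Suc d) (e' v))"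
  proof (rule ext)
    fix X
    show "Eop d (monomial_fn d e) X = (\<Sum>v<Suc d. monomial_fn (Suc d) (e' v)) X"
    proof (cases "X \<in> sym_mats (Suc d)")
      case True
      have "Eop d (monomial_fn d e) X = (\<Sum>v<Suc d. monomial_fn d e (trunc d (perm_act (Transposition.transpose v d) X)))"
        using True by (simp only: Eop_def if_True)
      also have "\<dots> = (\<Sum>v<Suc d. monomial_fn (Suc d) (e' v) X)"
        by (rule sum.cong[OF refl]) (use key True in simp)
      also have "\<dots> = (\<Sum>v<Suc d. monomial_fn (Suc d) (e' v)) X" by (simp only: fsum_apply)
      finally show ?thesis .
    next
      case False
      then show ?thesis by (simp add: Eop_def fsum_apply monomial_fn_def)
    qed
  qed
  show ?thesis unfolding eq
    by (rule fs.span_sum) (use mem in \<open>auto intro: fs.span_base\<close>)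
qed

lemma perm_restrict:
  assumes "\<rho> permutes {..<Suc d}" "\<rho> d = d"
  shows "\<rho> permutes {..<d}"
proof -
  have A: "\<forall>x. x \<notin> {..<Suc d} \<longrightarrow> \<rho> x = x" "\<forall>y. \<exists>!x. \<rho> x = y"
    using assms(1) unfolding permutes_def by auto
  show ?thesis unfolding permutes_def
  proof (intro conjI allI impI)
    fix x assume "x \<notin> {..<d}"
    then show "\<rho> x = x" using A(1) assms(2) by (cases "x = d") auto
  next
    fix y show "\<exists>!x. \<rho> x = y" using A(2) by blast
  qed
qed

lemma trunc_perm:
  assumes "\<rho> permutes {..<d}"
  shows "trunc d (perm_act \<rho> Y) = perm_act \<rho> (trunc d Y)"
proof -
  have iff: "\<And>x. \<rho> x < d \<longleftrightarrow> x < d" using permutes_in_image[OF assms] by simp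
  show ?thesis by (simp add: trunc_def perm_act_def fun_eq_iff iff)
qed

lemma Eop_inv:
  assumes q: "q \<in> inv_poly_upto d m"
  shows "Eop d q \<in> inv_poly_upto (Suc d) m"
proof -
  have qsp: "q \<in> fs.span (monomials_upto d m)" using q by (auto simp: inv_poly_upto_def poly_upto_def)
  have qinv: "\<And>\<rho> W. \<rho> permutes {..<d} \<Longrightarrow> W \<in> sym_mats d \<Longrightarrow> q (perm_act \<rho> W) = q W"
    using q by (auto simp: inv_poly_upto_def)
  have sp: "Eop d q \<in> fs.span (monomials_upto (Suc d) m)"
  proof (rule span_map[OF Eop_add Eop_scale _ qsp])
    fix b assume "b \<in> monomials_upto d m"
    then obtain e where e: "b = monomial_fn d e" "\<forall>p. p \<notin> {..<d} \<times> {..<d} \<longrightarrow> e p = 0"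
        "(\<Sum>p\<in>{..<d} \<times> {..<d}. e p) \<le> m"
      unfolding monomials_upto_def by blast
    then show "Eop d b \<in> fs.span (monomials_upto (Suc d) m)"
      using Eop_mono[OF e(2) e(3)] by simp
  qed
  have "Eop d q (perm_act \<sigma> X) = Eop d q X" if \<sigma>: "\<sigma> permutes {..<Suc d}" and X: "X \<in> sym_mats (Suc d)" for \<sigma> X
  proof -
    have key: "q (trunc d (perm_act (Transposition.transpose v d) (perm_act \<sigma> X)))
        = q (trunc d (perm_act (Transposition.transpose (\<sigma> v) d) X))" if v: "v < Suc d" for v
    proof -
      define \<rho> where "\<rho> = Transposition.transpose (\<sigma> v) d \<circ> \<sigma> \<circ> Transposition.transpose v d"
      have \<sigma>v: "\<sigma> v < Suc d" using permutes_in_image[OF \<sigma>, of v] v by simp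
      have \<rho>p: "\<rho> permutes {..<Suc d}" unfolding \<rho>_def
        by (intro permutes_compose permutes_swap_id \<sigma>) (use v \<sigma>v in auto)
      have \<rho>d: "\<rho> d = d" by (simp add: \<rho>_def)
      have \<rho>': "\<rho> permutes {..<d}" by (rule perm_restrict[OF \<rho>p \<rho>d])
      have comp: "\<sigma> \<circ> Transposition.transpose v d = Transposition.transpose (\<sigma> v) d \<circ> \<rho>"
        by (simp add: \<rho>_def fun_eq_iff)
      have "perm_act (Transposition.transpose v d) (perm_act \<sigma> X) = perm_act (\<sigma> \<circ> Transposition.transpose v d) X"
        by (simp add: perm_comp)
      also have "\<dots> = perm_act \<rho> (perm_act (Transposition.transpose (\<sigma> v) d) X)"
        by (simp only: comp perm_comp)
      finally have "trunc d (perm_act (Transposition.transpose v d) (perm_act \<sigma> X))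
          = perm_act \<rho> (trunc d (perm_act (Transposition.transpose (\<sigma> v) d) X))"
        by (simp add: trunc_perm[OF \<rho>'])
      moreover have "trunc d (perm_act (Transposition.transpose (\<sigma> v) d) X) \<in> sym_mats d"
        by (rule trunc_sym) (rule perm_symm[OF X])
      ultimately show ?thesis using qinv[OF \<rho>'] by simp
    qed
    have "Eop d q (perm_act \<sigma> X) = (\<Sum>v<Suc d. q (trunc d (perm_act (Transposition.transpose v d) (perm_act \<sigma> X))))"
      using perm_sym[OF \<sigma> X] by (simp only: Eop_def if_True)
    also have "\<dots> = (\<Sum>v<Suc d. q (trunc d (perm_act (Transposition.transpose (\<sigma> v) d) X)))"
      by (rule sum.cong[OF refl]) (use key in simp)
    also have "\<dots> = (\<Sum>v<Suc d. q (trunc d (perm_act (Transposition.transpose v d) X)))"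
      by (rule sum.reindex_bij_betw[OF permutes_imp_bij[OF \<sigma>], of "\<lambda>v. q (trunc d (perm_act (Transposition.transpose v d) X))"])
    also have "\<dots> = Eop d q X" using X by (simp only: Eop_def if_True)
    finally show ?thesis .
  qed
  then show ?thesis using sp by (auto simp: inv_poly_upto_def poly_upto_def)
qed

lemma RE:
  assumes q: "q \<in> fs.span (monomials_upto d m)"
  shows "Rop d (Eop d q) = q + Aop d q"
proof (rule ext)
  fix X
  show "Rop d (Eop d q) X = (q + Aop d q) X"
  proof (cases "X \<in> sym_mats d")
    case True
    have X': "X \<in> sym_mats (Suc d)" using True sym_mono[of d "Suc d"] by auto
    have X0: "\<And>i j. d \<le> i \<or> d \<le> j \<Longrightarrow> X i j = 0" using True by (auto simp: sym_mats_def)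
    have Xd: "trunc d (perm_act (Transposition.transpose d d) X) = X"
      using X0 by (auto simp: trunc_def perm_act_def fun_eq_iff)
    have Zeq: "trunc d (perm_act (Transposition.transpose v d) X) = Zv v X" if v: "v < d" for v
    proof (rule ext, rule ext)
      fix i j
      show "trunc d (perm_act (Transposition.transpose v d) X) i j = Zv v X i j"
        using v X0 by (auto simp: trunc_def perm_act_def Zv_def transpose_def)
    qed
    have "Eop d q X = (\<Sum>v<Suc d. q (trunc d (perm_act (Transposition.transpose v d) X)))"
      using X' by (simp only: Eop_def if_True)
    also have "\<dots> = (\<Sum>v<d. q (trunc d (perm_act (Transposition.transpose v d) X))) + q X"
      by (simp only: sum.lessThan_Suc Xd)
    also have "\<dots> = (\<Sum>v<d. q (Zv v X)) + q X"
      by (simp add: Zeq)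
    finally show ?thesis using True by (simp add: Rop_def Aop_def)
  next
    case False
    then show ?thesis using span_vanish[OF q False] by (simp add: Rop_def Aop_def)
  qed
qed

lemma Eop_inj0:
  assumes q: "q \<in> fs.span (monomials_upto d m)" and E: "Eop d q = 0"
  shows "q = 0"
proof -
  have "Rop d (Eop d q) = 0" using E by (simp add: Rop_def fun_eq_iff)
  then have "q + Aop d q = 0" using RE[OF q] by simp
  then have "\<And>X. Aop d q X = - q X" by (metis add_eq_0_iff plus_fun_apply zero_fun_def)
  then have Aq: "Aop d q = fscale (-1) q" by (simp add: fun_eq_iff fscale_apply)
  define K where "K = (\<lambda>s. real d - real s) ` {..d}"
  have fK: "finite K" by (simp add: K_def)
  have nK: "-1 \<notin> K"
  proof
    assume "-1 \<in> K"
    then obtain s where "s \<le> d" "-1 = real d - real s" by (auto simp: K_def)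
    then show False by linarith
  qed
  have eK: "\<forall>b\<in>monomials_upto d m. \<exists>k\<in>K. Aop d b = fscale k b"
  proof
    fix b assume "b \<in> monomials_upto d m"
    then obtain e where e: "b = monomial_fn d e"
      unfolding monomials_upto_def by blast
    have "card (vset d e) \<le> card {..<d}" by (rule card_mono[OF _ vset_sub]) simp
    then have "card (vset d e) \<in> {..d}" by simp
    then have "real d - real (card (vset d e)) \<in> K"
      unfolding K_def by (rule imageI)
    moreover have "Aop d b = fscale (real d - real (card (vset d e))) b"
      unfolding e by (rule Aop_mono)
    ultimately show "\<exists>k\<in>K. Aop d b = fscale k b" by blast
  qed
  show ?thesis by (rule eigen_zero[OF fK eK q Aq nK])
qed

lemma dim_le_inj:
  assumes f: "module_hom fscale fscale f" and S: "fs.subspace S" and inj: "inj_on f S"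
    and fST: "f ` S \<subseteq> T" and TW: "T \<subseteq> fs.span W" and W: "finite W"
  shows "fs.dim S \<le> fs.dim T"
proof -
  obtain B where B: "B \<subseteq> S" "fs.independent B" "S \<subseteq> fs.span B" "card B = fs.dim S"
    using fs.basis_exists by blast
  obtain C where C: "C \<subseteq> T" "fs.independent C" "T \<subseteq> fs.span C" "card C = fs.dim T"
    using fs.basis_exists by blast
  have spB: "fs.span B \<subseteq> S" using B(1) S by (rule fs.span_minimal)
  have injB: "inj_on f (fs.span B)" using inj spB by (rule inj_on_subset)
  have indep: "fs.independent (f ` B)"
    using module_hom.dependent_inj_imageD[OF f _ injB] B(2) by blast
  have fC: "finite C" using fs.independent_span_bound[OF W C(2)] C(1) TW by auto
  have "f ` B \<subseteq> fs.span C" using B(1) fST C(3) by auto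
  then have "card (f ` B) \<le> card C"
    using fs.independent_span_bound[OF fC indep] by auto
  moreover have "card (f ` B) = card B" using card_image inj_on_subset[OF inj B(1)] by blast
  ultimately show ?thesis using B(4) C(4) by simp
qed

lemma mod_fs: "module fscale"
  using module_iff_vector_space fs.vector_space_axioms by blast

lemma Rop_hom: "module_hom fscale fscale (Rop d)"
  unfolding module_hom_iff using mod_fs Rop_add Rop_scale by blast

lemma Eop_hom: "module_hom fscale fscale (Eop d)"
  unfolding module_hom_iff using mod_fs Eop_add Eop_scale by blast

lemma dim_step:
  assumes dm: "2 * m \<le> d"
  shows "inv_dim (Suc d) m = inv_dim d m"
proof (rule antisym)
  show "inv_dim (Suc d) m \<le> inv_dim d m" unfolding inv_dim_def
  proof (rule dim_le_inj[OF Rop_hom inv_subspace _ _ inv_sub finite_monos])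
    show "inj_on (Rop d) (inv_poly_upto (Suc d) m)"
    proof (rule inj_onI)
      fix p1 p2 assume p1: "p1 \<in> inv_poly_upto (Suc d) m" and p2: "p2 \<in> inv_poly_upto (Suc d) m"
        and eq: "Rop d p1 = Rop d p2"
      have pd: "p1 - p2 \<in> inv_poly_upto (Suc d) m" using inv_subspace p1 p2 by (rule fs.subspace_diff)
      have "Rop d (p1 - p2) = 0"
      proof (rule ext)
        fix X show "Rop d (p1 - p2) X = 0 X"
          using fun_cong[OF eq, of X] by (auto simp: Rop_def split: if_splits)
      qed
      then have "p1 - p2 = 0" using Rop_inj0[OF dm pd] by simp
      then show "p1 = p2" by simp
    qed
    show "Rop d ` inv_poly_upto (Suc d) m \<subseteq> inv_poly_upto d m" using Rop_inv by blast
  qed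
next
  show "inv_dim d m \<le> inv_dim (Suc d) m" unfolding inv_dim_def
  proof (rule dim_le_inj[OF Eop_hom inv_subspace _ _ inv_sub finite_monos])
    show "inj_on (Eop d) (inv_poly_upto d m)"
    proof (rule inj_onI)
      fix p1 p2 assume p1: "p1 \<in> inv_poly_upto d m" and p2: "p2 \<in> inv_poly_upto d m"
        and eq: "Eop d p1 = Eop d p2"
      have pd: "p1 - p2 \<in> inv_poly_upto d m" using inv_subspace p1 p2 by (rule fs.subspace_diff)
      have "Eop d (p1 - p2) = Eop d p1 - Eop d p2"
        using Eop_add[of d "p1 - p2" p2] by simp
      then have "Eop d (p1 - p2) = 0" using eq by simp
      then have "p1 - p2 = 0" using Eop_inj0[OF _ ] pd inv_sub by blast
      then show "p1 = p2" by simp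
    qed
    show "Eop d ` inv_poly_upto d m \<subseteq> inv_poly_upto (Suc d) m" using Eop_inv by blast
  qed
qed

lemma dim_const:
  assumes "2 * m \<le> d"
  shows "inv_dim d m = inv_dim (2 * m) m"
  using assms
proof (induction d rule: nat_induct_at_least)
  case base then show ?case by simp
next
  case (Suc d) then show ?case using dim_step[of m d] by simp
qed



definition Avg :: "nat \<Rightarrow> (mat \<Rightarrow> real) \<Rightarrow> (mat \<Rightarrow> real)" where
  "Avg n f = (\<lambda>X. if X \<in> sym_mats n then (\<Sum>\<sigma>\<in>{\<sigma>. \<sigma> permutes {..<n}}. f (perm_act \<sigma> X)) else 0)"

lemma Avg_add: "Avg n (f + g) = Avg n f + Avg n g"
  by (auto simp: Avg_def fun_eq_iff sum.distrib)
lemma Avg_scale: "Avg n (fscale a f) = fscale a (Avg n f)"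
  by (auto simp: Avg_def fun_eq_iff fscale_apply sum_distrib_left)

lemma inv_span_avg:
  assumes p: "p \<in> inv_poly_upto n m"
  shows "p \<in> fs.span (Avg n ` monomials_upto n m)"
proof -
  have psp: "p \<in> fs.span (monomials_upto n m)" using p by (auto simp: inv_poly_upto_def poly_upto_def)
  have pinv: "\<And>\<sigma> X. \<sigma> permutes {..<n} \<Longrightarrow> X \<in> sym_mats n \<Longrightarrow> p (perm_act \<sigma> X) = p X"
    using p by (auto simp: inv_poly_upto_def)
  have cardP: "card {\<sigma>. \<sigma> permutes {..<n}} = fact n" by (rule card_permutations) auto
  have Ap: "Avg n p = fscale (fact n) p"
  proof (rule ext)
    fix X
    show "Avg n p X = fscale (fact n) p X"
    proof (cases "X \<in> sym_mats n")
      case True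
      have "(\<Sum>\<sigma>\<in>{\<sigma>. \<sigma> permutes {..<n}}. p (perm_act \<sigma> X)) = (\<Sum>\<sigma>\<in>{\<sigma>. \<sigma> permutes {..<n}}. p X)"
        by (rule sum.cong[OF refl]) (use pinv True in simp)
      also have "\<dots> = real (card {\<sigma>. \<sigma> permutes {..<n}}) * p X" by simp
      also have "\<dots> = fact n * p X" by (simp add: cardP)
      finally show ?thesis using True by (simp add: Avg_def fscale_apply)
    next
      case False
      then show ?thesis using span_vanish[OF psp False] by (simp add: Avg_def fscale_apply)
    qed
  qed
  have "Avg n p \<in> fs.span (Avg n ` monomials_upto n m)"
    by (rule span_map[OF Avg_add Avg_scale _ psp]) (auto intro: fs.span_base)
  then have "fscale (1 / fact n) (Avg n p) \<in> fs.span (Avg n ` monomials_upto n m)"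
    by (rule fs.span_scale)
  moreover have "fscale (1 / fact n) (Avg n p) = p"
    by (simp add: Ap fun_eq_iff fscale_apply)
  ultimately show ?thesis by simp
qed

lemma perms_comp_bij:
  assumes \<pi>: "\<pi> permutes {..<n}"
  shows "bij_betw (\<lambda>\<sigma>. \<sigma> \<circ> inv \<pi>) {\<sigma>. \<sigma> permutes {..<n}} {\<sigma>. \<sigma> permutes {..<n}}"
proof (rule bij_betw_byWitness[where f' = "\<lambda>\<tau>. \<tau> \<circ> \<pi>"])
  show "\<forall>a\<in>{\<sigma>. \<sigma> permutes {..<n}}. a \<circ> inv \<pi> \<circ> \<pi> = a"
    by (simp add: o_assoc[symmetric] permutes_inv_o[OF \<pi>])
  show "\<forall>a\<in>{\<sigma>. \<sigma> permutes {..<n}}. a \<circ> \<pi> \<circ> inv \<pi> = a"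
    by (simp add: o_assoc[symmetric] permutes_inv_o[OF \<pi>])
  show "(\<lambda>\<sigma>. \<sigma> \<circ> inv \<pi>) ` {\<sigma>. \<sigma> permutes {..<n}} \<subseteq> {\<sigma>. \<sigma> permutes {..<n}}"
    using permutes_compose[OF permutes_inv[OF \<pi>]] by auto
  show "(\<lambda>\<sigma>. \<sigma> \<circ> \<pi>) ` {\<sigma>. \<sigma> permutes {..<n}} \<subseteq> {\<sigma>. \<sigma> permutes {..<n}}"
    using permutes_compose[OF \<pi>] by auto
qed

lemma avg_perm_exp:
  assumes \<pi>: "\<pi> permutes {..<n}"
  shows "Avg n (monomial_fn n (\<lambda>p. e (\<pi> (fst p), \<pi> (snd p)))) = Avg n (monomial_fn n e)"
proof (rule ext)
  fix X
  show "Avg n (monomial_fn n (\<lambda>p. e (\<pi> (fst p), \<pi> (snd p)))) X = Avg n (monomial_fn n e) X"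
  proof (cases "X \<in> sym_mats n")
    case True
    have inner: "monomial_fn n (\<lambda>p. e (\<pi> (fst p), \<pi> (snd p))) (perm_act \<sigma> X)
        = monomial_fn n e (perm_act (\<sigma> \<circ> inv \<pi>) X)" if \<sigma>: "\<sigma> permutes {..<n}" for \<sigma>
    proof -
      have m1: "perm_act \<sigma> X \<in> sym_mats n" by (rule perm_sym[OF \<sigma> True])
      have m2: "perm_act (\<sigma> \<circ> inv \<pi>) X \<in> sym_mats n"
        by (rule perm_sym[OF permutes_compose[OF permutes_inv[OF \<pi>] \<sigma>] True])
      define G where "G q = X (\<sigma> (inv \<pi> (fst q))) (\<sigma> (inv \<pi> (snd q))) ^ e q" for q
      have "(\<Prod>p\<in>{..<n} \<times> {..<n}. perm_act \<sigma> X (fst p) (snd p) ^ e (\<pi> (fst p), \<pi> (snd p)))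
          = (\<Prod>p\<in>{..<n} \<times> {..<n}. G (\<pi> (fst p), \<pi> (snd p)))"
        by (simp add: G_def perm_act_def permutes_inverses[OF \<pi>])
      also have "\<dots> = (\<Prod>p\<in>{..<n} \<times> {..<n}. G p)" by (rule prod_pairs_perm[OF \<pi>])
      also have "\<dots> = (\<Prod>p\<in>{..<n} \<times> {..<n}. perm_act (\<sigma> \<circ> inv \<pi>) X (fst p) (snd p) ^ e p)"
        by (simp add: G_def perm_act_def)
      finally show ?thesis using m1 m2 by (simp add: monomial_fn_def)
    qed
    have "Avg n (monomial_fn n (\<lambda>p. e (\<pi> (fst p), \<pi> (snd p)))) X
        = (\<Sum>\<sigma>\<in>{\<sigma>. \<sigma> permutes {..<n}}. monomial_fn n e (perm_act (\<sigma> \<circ> inv \<pi>) X))"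
      using True by (simp add: Avg_def inner)
    also have "\<dots> = (\<Sum>\<tau>\<in>{\<sigma>. \<sigma> permutes {..<n}}. monomial_fn n e (perm_act \<tau> X))"
      by (rule sum.reindex_bij_betw[OF perms_comp_bij[OF \<pi>], of "\<lambda>\<tau>. monomial_fn n e (perm_act \<tau> X)"])
    also have "\<dots> = Avg n (monomial_fn n e) X" using True by (simp add: Avg_def)
    finally show ?thesis .
  next
    case False
    then show ?thesis by (simp add: Avg_def)
  qed
qed

definition dec :: "(nat \<Rightarrow> nat \<Rightarrow> nat) \<Rightarrow> nat \<times> nat \<Rightarrow> nat" where
  "dec M p = (if fst p < snd p then M (fst p) (snd p) else if fst p = snd p then M (fst p) (fst p) div 2 else 0)"

lemma swap_bij: "bij_betw (\<lambda>p. (snd p, fst p)) ({..<n} \<times> {..<n}) ({..<n} \<times> {..<n})"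
  by (rule bij_betw_byWitness[where f' = "\<lambda>p. (snd p, fst p)"]) auto

lemma mono_dec:
  assumes X: "X \<in> sym_mats n"
  shows "monomial_fn n e X = monomial_fn n (dec (\<lambda>a b. e (a,b) + e (b,a))) X"
proof -
  define f where "f p = X (fst p) (snd p)" for p
  have fs: "\<And>p. f (snd p, fst p) = f p" using X by (simp add: f_def sym_mats_def)
  define U where "U p = (if fst p < snd p then e p else 0)" for p
  define L where "L p = (if snd p < fst p then e p else 0)" for p
  define D where "D p = (if fst p = snd p then e p else 0)" for p
  have es: "\<And>p. e p = U p + L p + D p" by (auto simp: U_def L_def D_def)
  have ds: "\<And>p. dec (\<lambda>a b. e (a,b) + e (b,a)) p = U p + L (snd p, fst p) + D p"
    by (auto simp: U_def L_def D_def dec_def)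
  have "(\<Prod>p\<in>{..<n} \<times> {..<n}. f p ^ L (snd p, fst p)) = (\<Prod>p\<in>{..<n} \<times> {..<n}. f (snd p, fst p) ^ L (snd p, fst p))"
    by (simp add: fs)
  also have "\<dots> = (\<Prod>p\<in>{..<n} \<times> {..<n}. f p ^ L p)"
    using prod.reindex_bij_betw[OF swap_bij, of "\<lambda>p. f p ^ L p"] by simp
  finally have sw: "(\<Prod>p\<in>{..<n} \<times> {..<n}. f p ^ L (snd p, fst p)) = (\<Prod>p\<in>{..<n} \<times> {..<n}. f p ^ L p)" .
  have "(\<Prod>p\<in>{..<n} \<times> {..<n}. f p ^ e p) = (\<Prod>p\<in>{..<n} \<times> {..<n}. f p ^ U p * f p ^ L p * f p ^ D p)"
    by (rule prod.cong[OF refl]) (simp add: es power_add)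
  also have "\<dots> = (\<Prod>p\<in>{..<n} \<times> {..<n}. f p ^ U p) * (\<Prod>p\<in>{..<n} \<times> {..<n}. f p ^ L p) * (\<Prod>p\<in>{..<n} \<times> {..<n}. f p ^ D p)"
    by (simp add: prod.distrib)
  also have "\<dots> = (\<Prod>p\<in>{..<n} \<times> {..<n}. f p ^ U p) * (\<Prod>p\<in>{..<n} \<times> {..<n}. f p ^ L (snd p, fst p)) * (\<Prod>p\<in>{..<n} \<times> {..<n}. f p ^ D p)"
    by (simp add: sw)
  also have "\<dots> = (\<Prod>p\<in>{..<n} \<times> {..<n}. f p ^ U p * f p ^ L (snd p, fst p) * f p ^ D p)"
    by (simp add: prod.distrib)
  also have "\<dots> = (\<Prod>p\<in>{..<n} \<times> {..<n}. f p ^ dec (\<lambda>a b. e (a,b) + e (b,a)) p)"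
    by (rule prod.cong[OF refl]) (simp add: ds power_add)
  finally show ?thesis using X by (simp add: monomial_fn_def f_def)
qed

lemma sort_perm:
  fixes g :: "nat \<Rightarrow> nat"
  shows "\<exists>\<pi>. \<pi> permutes {..<n} \<and> sorted_wrt (\<ge>) (map (\<lambda>k. g (\<pi> k)) [0..<n])"
proof -
  define xs where "xs = rev (sort_key g [0..<n])"
  have d: "distinct xs" by (simp add: xs_def)
  have st: "set xs = {..<n}" by (auto simp: xs_def)
  have l: "length xs = n" by (simp add: xs_def)
  define \<pi> where "\<pi> k = (if k < n then xs ! k else k)" for k
  have b0: "bij_betw ((!) xs) {..<n} {..<n}" by (rule bij_betw_nth) (use d l st in auto)
  have "bij_betw \<pi> {..<n} {..<n} = bij_betw ((!) xs) {..<n} {..<n}"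
    by (rule bij_betw_cong) (simp add: \<pi>_def)
  then have b: "bij_betw \<pi> {..<n} {..<n}" using b0 by simp
  have p: "\<pi> permutes {..<n}" by (rule bij_imp_permutes[OF b]) (simp add: \<pi>_def)
  have "map (\<lambda>k. g (\<pi> k)) [0..<n] = map g xs"
    by (rule nth_equalityI) (auto simp: \<pi>_def l)
  moreover have "sorted_wrt (\<ge>) (map g xs)"
    by (simp add: xs_def rev_map[symmetric] sorted_wrt_rev)
  ultimately show ?thesis using p by auto
qed

definition Qset :: "nat list \<Rightarrow> (nat \<Rightarrow> nat \<Rightarrow> nat) set" where
  "Qset \<alpha> = {M :: nat \<Rightarrow> nat \<Rightarrow> nat.
      (\<forall>i j. M i j = M j i) \<and>
      (\<forall>i j. length \<alpha> \<le> i \<or> length \<alpha> \<le> j \<longrightarrow> M i j = 0) \<and>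
      (\<forall>i < length \<alpha>. (\<Sum>j<length \<alpha>. M i j) = \<alpha> ! i)}"

lemma q_Qset: "q_count \<alpha> = card (Qset \<alpha>)"
  by (simp add: q_count_def Qset_def)



lemma rep:
  assumes e0: "\<forall>p. p \<notin> {..<n} \<times> {..<n} \<longrightarrow> e p = 0"
    and es: "(\<Sum>p\<in>{..<n} \<times> {..<n}. e p) \<le> m"
  shows "\<exists>\<alpha> M. (\<exists>j\<le>m. \<alpha> \<in> partitions_of (2*j) \<and> M \<in> Qset \<alpha>)
           \<and> Avg n (monomial_fn n e) = Avg n (monomial_fn n (dec M))"
proof -
  define deg where "deg a = (\<Sum>b<n. e (a,b) + e (b,a))" for a
  obtain \<pi> where \<pi>: "\<pi> permutes {..<n}" and srt: "sorted_wrt (\<ge>) (map (\<lambda>k. deg (\<pi> k)) [0..<n])"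
    using sort_perm by blast
  define e' where "e' = (\<lambda>p. e (\<pi> (fst p), \<pi> (snd p)))"
  define M where "M = (\<lambda>a b. e' (a,b) + e' (b,a))"
  define degM where "degM k = (\<Sum>b<n. M k b)" for k
  have \<pi>i: "\<And>x. \<pi> x < n \<longleftrightarrow> x < n" using permutes_in_image[OF \<pi>] by simp
  have e'0: "e' (a,b) = 0" if "\<not> a < n \<or> \<not> b < n" for a b
  proof -
    have "(\<pi> a, \<pi> b) \<notin> {..<n} \<times> {..<n}" using that \<pi>i by auto
    then show ?thesis using e0 by (simp add: e'_def)
  qed
  have degM_eq: "degM k = deg (\<pi> k)" for k
  proof -
    have "degM k = (\<Sum>b<n. e (\<pi> k, \<pi> b) + e (\<pi> b, \<pi> k))" by (simp add: degM_def M_def e'_def)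
    also have "\<dots> = (\<Sum>b<n. e (\<pi> k, b) + e (b, \<pi> k))"
      using sum.reindex_bij_betw[OF permutes_imp_bij[OF \<pi>], of "\<lambda>b. e (\<pi> k, b) + e (b, \<pi> k)"] by simp
    finally show ?thesis by (simp add: deg_def)
  qed
  define degs where "degs = map degM [0..<n]"
  have degM_fun: "degM = (\<lambda>k. deg (\<pi> k))" by (rule ext) (rule degM_eq)
  have srt': "sorted_wrt (\<ge>) degs" using srt by (simp add: degs_def degM_fun)
  have ldegs: "length degs = n" by (simp add: degs_def)
  have degs_nth: "\<And>k. k < n \<Longrightarrow> degs ! k = degM k" by (simp add: degs_def)
  define \<alpha> where "\<alpha> = takeWhile (\<lambda>x. 0 < x) degs"
  define l where "l = length \<alpha>"
  have ln: "l \<le> n" using length_takeWhile_le[of "\<lambda>x. 0 < x" degs] by (simp add: l_def \<alpha>_def ldegs)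
  have \<alpha>nth: "\<alpha> ! k = degM k" if "k < l" for k
  proof -
    have "\<alpha> ! k = degs ! k" using that takeWhile_nth[of k "\<lambda>x. 0 < x" degs] by (simp add: l_def \<alpha>_def)
    then show ?thesis using that ln degs_nth by simp
  qed
  have zero: "degM k = 0" if k: "l \<le> k" "k < n" for k
  proof -
    have ll: "l < length degs" using k ldegs by simp
    have z: "\<not> 0 < degs ! l"
      using nth_length_takeWhile[of "\<lambda>x. 0 < x" degs] ll by (simp add: l_def \<alpha>_def)
    have "degs ! k \<le> degs ! l"
    proof (cases "k = l")
      case False
      then have "l < k" using k by simp
      then show ?thesis using sorted_wrt_nth_less[OF srt' _ ] k ldegs by fastforce
    qed simp
    then show ?thesis using z degs_nth k by simp
  qed
  have Mz: "M k b = 0" if "l \<le> k" for k b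
  proof (cases "k < n \<and> b < n")
    case True
    have "M k b \<le> degM k" unfolding degM_def using True by (intro member_le_sum) auto
    then show ?thesis using zero[OF that] True by simp
  next
    case False
    then show ?thesis using e'0 by (auto simp: M_def)
  qed
  have Msym: "\<And>a b. M a b = M b a" by (simp add: M_def)
  have MQ: "M \<in> Qset \<alpha>"
    unfolding Qset_def
  proof (intro CollectI conjI allI impI)
    fix i j show "M i j = M j i" by (rule Msym)
  next
    fix i j assume "length \<alpha> \<le> i \<or> length \<alpha> \<le> j"
    then show "M i j = 0"
    proof
      assume "length \<alpha> \<le> i" then show ?thesis using Mz by (simp add: l_def)
    next
      assume "length \<alpha> \<le> j" then have "M j i = 0" using Mz by (simp add: l_def)
      then show ?thesis using Msym[of i j] by simp
    qed
  next
    fix i assume i: "i < length \<alpha>"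
    have "(\<Sum>j<l. M i j) = (\<Sum>j<n. M i j)"
      by (rule sum.mono_neutral_left) (use ln Mz Msym in auto)
    also have "\<dots> = \<alpha> ! i" using \<alpha>nth i by (simp add: degM_def l_def)
    finally show "(\<Sum>j<length \<alpha>. M i j) = \<alpha> ! i" by (simp add: l_def)
  qed
  define J where "J = (\<Sum>p\<in>{..<n} \<times> {..<n}. e p)"
  have Jm: "J \<le> m" using es by (simp add: J_def)
  have \<alpha>map: "\<alpha> = map degM [0..<l]"
    by (rule nth_equalityI) (auto simp: l_def \<alpha>nth[unfolded l_def])
  have "sum_list \<alpha> = (\<Sum>k<l. degM k)"
    by (simp add: \<alpha>map sum_set_upt_conv_sum_list_nat[symmetric] atLeast0LessThan)
  also have "\<dots> = (\<Sum>k<n. degM k)"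
    by (rule sum.mono_neutral_left) (use ln zero in auto)
  also have "\<dots> = (\<Sum>k<n. \<Sum>b<n. e' (k,b)) + (\<Sum>k<n. \<Sum>b<n. e' (b,k))"
    by (simp add: degM_def M_def sum.distrib)
  also have "(\<Sum>k<n. \<Sum>b<n. e' (b,k)) = (\<Sum>k<n. \<Sum>b<n. e' (k,b))"
    by (rule sum.swap)
  also have "(\<Sum>k<n. \<Sum>b<n. e' (k,b)) = (\<Sum>p\<in>{..<n} \<times> {..<n}. e' p)"
    by (simp add: sum.cartesian_product)
  also have "(\<Sum>p\<in>{..<n} \<times> {..<n}. e' p) = J"
    unfolding e'_def J_def by (rule sum_pairs_perm[OF \<pi>])
  finally have sl: "sum_list \<alpha> = 2 * J" by simp
  have part: "\<alpha> \<in> partitions_of (2 * J)"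
    unfolding partitions_of_def
  proof (intro CollectI conjI ballI)
    show "sorted_wrt (\<ge>) \<alpha>" unfolding \<alpha>_def by (rule sorted_wrt_takeWhile[OF srt'])
    fix x assume "x \<in> set \<alpha>" then show "0 < x" unfolding \<alpha>_def by (blast dest: set_takeWhileD)
  next
    show "sum_list \<alpha> = 2 * J" by (rule sl)
  qed
  have "Avg n (monomial_fn n e) = Avg n (monomial_fn n e')"
    unfolding e'_def by (rule avg_perm_exp[OF \<pi>, symmetric])
  also have "monomial_fn n e' = monomial_fn n (dec M)"
  proof (rule ext)
    fix X show "monomial_fn n e' X = monomial_fn n (dec M) X"
    proof (cases "X \<in> sym_mats n")
      case True then show ?thesis unfolding M_def by (rule mono_dec)
    qed (simp add: monomial_fn_def)
  qed
  finally show ?thesis using part MQ Jm by blast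
qed

lemma len_le_sum: "(\<forall>x\<in>set xs. 0 < (x::nat)) \<Longrightarrow> length xs \<le> sum_list xs"
  by (induction xs) auto

lemma finite_partitions: "finite (partitions_of k)"
proof -
  have "partitions_of k \<subseteq> {xs. set xs \<subseteq> {..k} \<and> length xs \<le> k}"
  proof
    fix xs assume "xs \<in> partitions_of k"
    then have p: "\<forall>x\<in>set xs. 0 < x" "sum_list xs = k" by (auto simp: partitions_of_def)
    have "set xs \<subseteq> {..k}" using member_le_sum_list[of _ xs] p(2) by auto
    moreover have "length xs \<le> k" using len_le_sum[OF p(1)] p(2) by simp
    ultimately show "xs \<in> {xs. set xs \<subseteq> {..k} \<and> length xs \<le> k}" by simp
  qed
  moreover have "finite {xs. set xs \<subseteq> {..k::nat} \<and> length xs \<le> k}"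
    by (rule finite_lists_length_le) simp
  ultimately show ?thesis by (rule finite_subset)
qed

lemma finite_Qset: "finite (Qset \<alpha>)"
proof -
  define l where "l = length \<alpha>"
  define s where "s = sum_list \<alpha>"
  define R where "R = {r :: nat \<Rightarrow> nat. \<forall>j. (j \<in> {..<l} \<longrightarrow> r j \<in> {..s}) \<and> (j \<notin> {..<l} \<longrightarrow> r j = 0)}"
  have fR: "finite R" unfolding R_def by (rule finite_set_of_finite_funs) auto
  have "Qset \<alpha> \<subseteq> {M. \<forall>i. (i \<in> {..<l} \<longrightarrow> M i \<in> R) \<and> (i \<notin> {..<l} \<longrightarrow> M i = (\<lambda>_. 0))}"
  proof
    fix M assume "M \<in> Qset \<alpha>"
    then have Q: "\<forall>i j. l \<le> i \<or> l \<le> j \<longrightarrow> M i j = 0" "\<forall>i<l. (\<Sum>j<l. M i j) = \<alpha> ! i"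
      by (auto simp: Qset_def l_def)
    show "M \<in> {M. \<forall>i. (i \<in> {..<l} \<longrightarrow> M i \<in> R) \<and> (i \<notin> {..<l} \<longrightarrow> M i = (\<lambda>_. 0))}"
    proof (intro CollectI allI conjI impI)
      fix i assume i: "i \<in> {..<l}"
      show "M i \<in> R" unfolding R_def
      proof (intro CollectI allI conjI impI)
        fix j assume j: "j \<in> {..<l}"
        have "M i j \<le> (\<Sum>j<l. M i j)" using j by (intro member_le_sum) auto
        also have "\<dots> = \<alpha> ! i" using Q(2) i by auto
        also have "\<dots> \<le> s" unfolding s_def using i by (intro member_le_sum_list) (auto simp: l_def)
        finally show "M i j \<in> {..s}" by simp
      next
        fix j assume "j \<notin> {..<l}" then show "M i j = 0" using Q(1) by auto
      qed
    next
      fix i assume "i \<notin> {..<l}" then show "M i = (\<lambda>_. 0)" using Q(1) by auto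
    qed
  qed
  moreover have "finite {M :: nat \<Rightarrow> nat \<Rightarrow> nat. \<forall>i. (i \<in> {..<l} \<longrightarrow> M i \<in> R) \<and> (i \<notin> {..<l} \<longrightarrow> M i = (\<lambda>_. 0))}"
    by (rule finite_set_of_finite_funs) (auto simp: fR)
  ultimately show ?thesis by (rule finite_subset)
qed

lemma bound: "inv_dim n m \<le> (\<Sum>j\<le>m. \<Sum>\<alpha>\<in>partitions_of (2 * j). q_count \<alpha>)"
proof -
  define T where "T = (\<Union>j\<in>{..m}. \<Union>\<alpha>\<in>partitions_of (2*j). (\<lambda>M. (\<alpha>, M)) ` Qset \<alpha>)"
  define G where "G = (\<lambda>x :: nat list \<times> (nat \<Rightarrow> nat \<Rightarrow> nat). Avg n (monomial_fn n (dec (snd x))))"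
  have fT: "finite T" unfolding T_def
    by (intro finite_UN_I finite_imageI finite_partitions finite_Qset finite_atMost)
  have "card T \<le> (\<Sum>j\<le>m. card (\<Union>\<alpha>\<in>partitions_of (2*j). (\<lambda>M. (\<alpha>, M)) ` Qset \<alpha>))"
    unfolding T_def by (rule card_UN_le) simp
  also have "\<dots> \<le> (\<Sum>j\<le>m. \<Sum>\<alpha>\<in>partitions_of (2*j). card ((\<lambda>M. (\<alpha>, M)) ` Qset \<alpha>))"
    by (intro sum_mono card_UN_le finite_partitions)
  also have "\<dots> \<le> (\<Sum>j\<le>m. \<Sum>\<alpha>\<in>partitions_of (2*j). q_count \<alpha>)"
    unfolding q_Qset by (intro sum_mono card_image_le finite_Qset)
  finally have cT: "card T \<le> (\<Sum>j\<le>m. \<Sum>\<alpha>\<in>partitions_of (2*j). q_count \<alpha>)" .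
  have AG: "Avg n ` monomials_upto n m \<subseteq> G ` T"
  proof
    fix y assume "y \<in> Avg n ` monomials_upto n m"
    then obtain e where e: "y = Avg n (monomial_fn n e)" "\<forall>p. p \<notin> {..<n} \<times> {..<n} \<longrightarrow> e p = 0"
        "(\<Sum>p\<in>{..<n} \<times> {..<n}. e p) \<le> m"
      unfolding monomials_upto_def by blast
    obtain \<alpha> M j where r: "j \<le> m" "\<alpha> \<in> partitions_of (2*j)" "M \<in> Qset \<alpha>"
        "Avg n (monomial_fn n e) = Avg n (monomial_fn n (dec M))"
      using rep[OF e(2) e(3)] by blast
    have "(\<alpha>, M) \<in> T" unfolding T_def using r(1-3) by blast
    moreover have "y = G (\<alpha>, M)" using e(1) r(4) by (simp add: G_def)
    ultimately show "y \<in> G ` T" by blast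
  qed
  have sub: "inv_poly_upto n m \<subseteq> fs.span (G ` T)"
  proof
    fix p assume "p \<in> inv_poly_upto n m"
    then have "p \<in> fs.span (Avg n ` monomials_upto n m)" by (rule inv_span_avg)
    then show "p \<in> fs.span (G ` T)" using fs.span_mono[OF AG] by blast
  qed
  have "inv_dim n m \<le> card (G ` T)" unfolding inv_dim_def
    by (rule fs.dim_le_card[OF sub finite_imageI[OF fT]])
  also have "\<dots> \<le> card T" by (rule card_image_le[OF fT])
  finally show ?thesis using cT by simp
qed

theorem mainTheorem7:
  fixes m :: nat
  shows "\<exists>N. (\<forall>d. 2 * m \<le> d \<longrightarrow> inv_dim d m = N) \<and>
             N \<le> (\<Sum>j\<le>m. \<Sum>\<alpha>\<in>partitions_of (2 * j). q_count \<alpha>)"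
proof (intro exI conjI allI impI)
  fix d assume "2 * m \<le> d"
  then show "inv_dim d m = inv_dim (2 * m) m" by (rule dim_const)
next
  show "inv_dim (2 * m) m \<le> (\<Sum>j\<le>m. \<Sum>\<alpha>\<in>partitions_of (2 * j). q_count \<alpha>)" by (rule bound)
qed

end
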